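(* Let $(l,k,b)$ be a suspension triplet for $(X_A,\sigma_A)$ and $c=l-k$. For $(x,r),(x',r')\in X^{\mathbb R}_{A,b}$ we have $(x,r)\sim_{l,k}(x',r')$ if and only if there exist $n,n'\in\mathbb Z_+$ such that $\sigma_A^n(x)=\sigma_A^{n'}(x')$, $r-c^n(x)=r'-c^{n'}(x')$, and $r-c^m(x)\ge l(\sigma_A^m(x))$ for all $0\le m<n$ and $r'-c^{m'}(x')\ge l(\sigma_A^{m'}(x'))$ for all $0\le m'<n'$.
   Context: Let $N>1$ and $A=[A(i,j)]_{i,j=1}^N$ an irreducible $\{0,1\}$-matrix which is not a permutation matrix. $X_A$ is the compact space of sequences $(x_n)_{n\in\mathbb N}$ with $x_n\in\{1,\dots,N\}$ and $A(x_n,x_{n+1})=1$ for all $n$; $\sigma_A((x_n)_n)=(x_{n+1})_n$. $\mathbb Z_+$, $\mathbb R_+$ denote nonnegative integers/reals. For a function $f$ on $X_A$ and $m\in\mathbb Z_+$, $f^m(x)=\sum_{i=0}^{m-1}f(\sigma_A^i(x))$ (so $f^0=0$). $H^A$ is the quotient of $C(X_A,\mathbb Z)$ by $\{u-u\circ\sigma_A\}$, $H^A_+$ the classes of $\mathbb Z_+$-valued continuous functions; $[f]\in H^A_+$ is an order unit if for every $[u]\in H^A$ some $n\in\mathbb N$ has $n[f]-[u]\in H^A_+$. A suspension triplet is $(l,k,b)$ with $l,k\in C(X_A,\mathbb R_+)$, $b\in C(X_A,\mathbb R)$ such that $c=l-k$ is integer-valued with $[c]$ an order unit, and $l-b$,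 $k-b\circ\sigma_A$ take values in $\mathbb Z_+$. $X^{\mathbb R}_{A,b}=\{(x,r)\in X_A\times\mathbb R: r\ge b(x)\}$ and $\sim_{l,k}$ is the equivalence relation on $X^{\mathbb R}_{A,b}$ generated by $(x,r)\sim_{l,k}(\sigma_A(x),r-c(x))$ whenever $r\ge l(x)$. *)

theory Defs
  imports "HOL-Analysis.Analysis"
begin

text \<open>Matrices are N x N {0,1}-matrices indexed by {1..N}, represented as nat => nat => nat.
Points of X_A are sequences nat => nat; the space nat => nat carries the product
topology of discrete nat (instance from Function_Topology), so X_A gets the subspace topology.\<close>

fun mpow :: "nat \<Rightarrow> (nat \<Rightarrow> nat \<Rightarrow> nat) \<Rightarrow> nat \<Rightarrow> nat \<Rightarrow> nat \<Rightarrow> nat" where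
  "mpow N A 0 i j = (if i = j then 1 else 0)"
| "mpow N A (Suc m) i j = (\<Sum>t\<in>{1..N}. mpow N A m i t * A t j)"

definition zero_one_matrix :: "nat \<Rightarrow> (nat \<Rightarrow> nat \<Rightarrow> nat) \<Rightarrow> bool" where
  "zero_one_matrix N A \<longleftrightarrow> (\<forall>i\<in>{1..N}. \<forall>j\<in>{1..N}. A i j \<in> {0, 1})"

definition irreducible_matrix :: "nat \<Rightarrow> (nat \<Rightarrow> nat \<Rightarrow> nat) \<Rightarrow> bool" where
  "irreducible_matrix N A \<longleftrightarrow>
     (\<forall>i\<in>{1..N}. \<forall>j\<in>{1..N}. \<exists>m>0. mpow N A m i j > 0)"

definition permutation_matrix :: "nat \<Rightarrow> (nat \<Rightarrow> nat \<Rightarrow> nat) \<Rightarrow> bool" where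
  "permutation_matrix N A \<longleftrightarrow>
     (\<exists>\<pi>. bij_betw \<pi> {1..N} {1..N} \<and>
        (\<forall>i\<in>{1..N}. \<forall>j\<in>{1..N}. A i j = (if j = \<pi> i then 1 else 0)))"

definition XA :: "nat \<Rightarrow> (nat \<Rightarrow> nat \<Rightarrow> nat) \<Rightarrow> (nat \<Rightarrow> nat) set" where
  "XA N A = {x. \<forall>n. x n \<in> {1..N} \<and> A (x n) (x (Suc n)) = 1}"

definition sigmaA :: "(nat \<Rightarrow> nat) \<Rightarrow> (nat \<Rightarrow> nat)" where
  "sigmaA x = (\<lambda>n. x (Suc n))"

definition birk :: "((nat \<Rightarrow> nat) \<Rightarrow> 'a::comm_monoid_add) \<Rightarrow> nat \<Rightarrow> (nat \<Rightarrow> nat) \<Rightarrow> 'a" where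
  "birk f m x = (\<Sum>i<m. f ((sigmaA ^^ i) x))"

definition CZ :: "nat \<Rightarrow> (nat \<Rightarrow> nat \<Rightarrow> nat) \<Rightarrow> ((nat \<Rightarrow> nat) \<Rightarrow> int) set" where
  "CZ N A = {f. continuous_on (XA N A) f}"

text \<open>[f] in H^A_+ : f is cohomologous (mod coboundaries u - u o sigma, u in C(X_A,Z))
  to a Z_+-valued continuous function.\<close>
definition HA_pos :: "nat \<Rightarrow> (nat \<Rightarrow> nat \<Rightarrow> nat) \<Rightarrow> ((nat \<Rightarrow> nat) \<Rightarrow> int) \<Rightarrow> bool" where
  "HA_pos N A f \<longleftrightarrow>
     (\<exists>g\<in>CZ N A. \<exists>u\<in>CZ N A. (\<forall>x\<in>XA N A. g x \<ge> 0 \<and> f x = g x + (u x - u (sigmaA x))))"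

definition order_unit :: "nat \<Rightarrow> (nat \<Rightarrow> nat \<Rightarrow> nat) \<Rightarrow> ((nat \<Rightarrow> nat) \<Rightarrow> int) \<Rightarrow> bool" where
  "order_unit N A f \<longleftrightarrow>
     f \<in> CZ N A \<and> HA_pos N A f \<and>
     (\<forall>u\<in>CZ N A. \<exists>n::nat. n \<ge> 1 \<and> HA_pos N A (\<lambda>x. int n * f x - u x))"

definition suspension_triplet ::
  "nat \<Rightarrow> (nat \<Rightarrow> nat \<Rightarrow> nat) \<Rightarrow> ((nat \<Rightarrow> nat) \<Rightarrow> real) \<Rightarrow> ((nat \<Rightarrow> nat) \<Rightarrow> real)
     \<Rightarrow> ((nat \<Rightarrow> nat) \<Rightarrow> real) \<Rightarrow> bool" where
  "suspension_triplet N A l k b \<longleftrightarrow>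
     continuous_on (XA N A) l \<and> continuous_on (XA N A) k \<and> continuous_on (XA N A) b \<and>
     (\<forall>x\<in>XA N A. l x \<ge> 0 \<and> k x \<ge> 0) \<and>
     (\<exists>c::(nat \<Rightarrow> nat) \<Rightarrow> int. (\<forall>x\<in>XA N A. real_of_int (c x) = l x - k x) \<and> order_unit N A c) \<and>
     (\<forall>x\<in>XA N A. l x - b x \<in> \<nat>) \<and>
     (\<forall>x\<in>XA N A. k x - b (sigmaA x) \<in> \<nat>)"

definition XAR :: "nat \<Rightarrow> (nat \<Rightarrow> nat \<Rightarrow> nat) \<Rightarrow> ((nat \<Rightarrow> nat) \<Rightarrow> real) \<Rightarrow> ((nat \<Rightarrow> nat) \<times> real) set" where
  "XAR N A b = {(x, r). x \<in> XA N A \<and> r \<ge> b x}"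

definition susp_step ::
  "nat \<Rightarrow> (nat \<Rightarrow> nat \<Rightarrow> nat) \<Rightarrow> ((nat \<Rightarrow> nat) \<Rightarrow> real) \<Rightarrow> ((nat \<Rightarrow> nat) \<Rightarrow> real)
     \<Rightarrow> ((nat \<Rightarrow> nat) \<Rightarrow> real) \<Rightarrow> (((nat \<Rightarrow> nat) \<times> real) \<times> ((nat \<Rightarrow> nat) \<times> real)) set" where
  "susp_step N A l k b = {((x, r), (sigmaA x, r - (l x - k x))) | x r. (x, r) \<in> XAR N A b \<and> r \<ge> l x}"

definition susp_equiv ::
  "nat \<Rightarrow> (nat \<Rightarrow> nat \<Rightarrow> nat) \<Rightarrow> ((nat \<Rightarrow> nat) \<Rightarrow> real) \<Rightarrow> ((nat \<Rightarrow> nat) \<Rightarrow> real)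
     \<Rightarrow> ((nat \<Rightarrow> nat) \<Rightarrow> real) \<Rightarrow> (((nat \<Rightarrow> nat) \<times> real) \<times> ((nat \<Rightarrow> nat) \<times> real)) set" where
  "susp_equiv N A l k b =
     \<Inter>{E. equiv (XAR N A b) E \<and> susp_step N A l k b \<subseteq> E}"

end

theory Submission
  imports Defs
begin

definition dpath :: "('a \<Rightarrow> 'a) \<Rightarrow> ('a \<Rightarrow> bool) \<Rightarrow> nat \<Rightarrow> 'a \<Rightarrow> bool" where
  "dpath g D n p \<longleftrightarrow> (\<forall>m<n. D ((g^^m) p))"

lemma dpath_add: "dpath g D (a+b) p \<longleftrightarrow> dpath g D a p \<and> dpath g D b ((g^^a) p)"
proof
  assume h: "dpath g D (a+b) p"
  show "dpath g D a p \<and> dpath g D b ((g^^a) p)"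
    using h unfolding dpath_def
    by (metis add.commute add_less_cancel_left comp_apply funpow_add trans_less_add1)
next
  assume h: "dpath g D a p \<and> dpath g D b ((g^^a) p)"
  show "dpath g D (a+b) p" unfolding dpath_def
  proof (intro allI impI)
    fix m assume m: "m < a+b"
    show "D ((g^^m) p)"
    proof (cases "m < a")
      case True then show ?thesis using h unfolding dpath_def by blast
    next
      case False
      then obtain j where j: "m = a + j" "j < b" using m by (metis add_less_cancel_left le_Suc_ex not_less)
      have "(g^^m) p = (g^^j) ((g^^a) p)" using j by (simp only: add.commute[of a j] funpow_add comp_apply)
      then show ?thesis using h j unfolding dpath_def by simp
    qed
  qed
qed

definition dR where
  "dR g D p q \<longleftrightarrow> (\<exists>n n'. (g^^n) p = (g^^n') q \<and> dpath g D n p \<and> dpath g D n' q)"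

lemma dR_sym: "dR g D p q \<Longrightarrow> dR g D q p"
proof -
  assume "dR g D p q"
  then obtain n n' where "(g^^n) p = (g^^n') q" "dpath g D n p" "dpath g D n' q" unfolding dR_def by blast
  then show ?thesis unfolding dR_def by (intro exI[of _ n'] exI[of _ n]) simp
qed

lemma dR_trans_aux:
  assumes "(g^^n1) p = (g^^n2) q" "dpath g D n1 p" "dpath g D n2 q"
    "(g^^n3) q = (g^^n4) w" "dpath g D n3 q" "dpath g D n4 w" "n2 \<le> n3"
  shows "dR g D p w"
proof -
  obtain j where j: "n3 = n2 + j" using assms(7) le_Suc_ex by blast
  have pj: "dpath g D j ((g^^n2) q)" using assms(5) j dpath_add[of g D n2 j q] by simp
  have "(g^^(n1+j)) p = (g^^j) ((g^^n1) p)" by (simp only: add.commute[of n1 j] funpow_add comp_apply)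
  also have "\<dots> = (g^^j) ((g^^n2) q)" using assms(1) by simp
  also have "\<dots> = (g^^n3) q" using j by (simp only: add.commute[of n2 j] funpow_add comp_apply)
  finally have e: "(g^^(n1+j)) p = (g^^n4) w" using assms(4) by simp
  have "dpath g D (n1+j) p" using dpath_add[of g D n1 j p] assms(2) pj assms(1) by simp
  then show ?thesis unfolding dR_def using e assms(6) by blast
qed

lemma dR_trans: "dR g D p q \<Longrightarrow> dR g D q w \<Longrightarrow> dR g D p w"
proof -
  assume a: "dR g D p q" "dR g D q w"
  then obtain n1 n2 n3 n4 where h: "(g^^n1) p = (g^^n2) q" "dpath g D n1 p" "dpath g D n2 q"
    "(g^^n3) q = (g^^n4) w" "dpath g D n3 q" "dpath g D n4 w" unfolding dR_def by blast
  show ?thesis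
  proof (cases "n2 \<le> n3")
    case True then show ?thesis using dR_trans_aux[OF h] by blast
  next
    case False
    have "dR g D w p" using dR_trans_aux[OF h(4)[symmetric] h(6) h(5) h(1)[symmetric] h(3) h(2)] False by simp
    then show ?thesis unfolding dR_def by metis
  qed
qed

definition gs :: "((nat \<Rightarrow> nat) \<Rightarrow> real) \<Rightarrow> ((nat \<Rightarrow> nat) \<Rightarrow> real) \<Rightarrow> (nat \<Rightarrow> nat) \<times> real \<Rightarrow> (nat \<Rightarrow> nat) \<times> real" where
  "gs l k p = (sigmaA (fst p), snd p - (l (fst p) - k (fst p)))"

lemma gs_pow: "(gs l k ^^ m) (x, r) = ((sigmaA ^^ m) x, r - birk (\<lambda>y. l y - k y) m x)"
  by (induction m) (auto simp: gs_def birk_def)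

lemma sigma_XA: "x \<in> XA N A \<Longrightarrow> sigmaA x \<in> XA N A"
  unfolding XA_def sigmaA_def by auto

theorem lemma2p1:
  fixes N :: nat and A :: "nat \<Rightarrow> nat \<Rightarrow> nat"
    and l k b :: "(nat \<Rightarrow> nat) \<Rightarrow> real"
    and x x' :: "nat \<Rightarrow> nat" and r r' :: real
  assumes "N > 1"
    and "zero_one_matrix N A"
    and "irreducible_matrix N A"
    and "\<not> permutation_matrix N A"
    and "suspension_triplet N A l k b"
    and "(x, r) \<in> XAR N A b" and "(x', r') \<in> XAR N A b"
  shows "((x, r), (x', r')) \<in> susp_equiv N A l k b \<longleftrightarrow>
    (\<exists>n n' :: nat.
       (sigmaA ^^ n) x = (sigmaA ^^ n') x' \<and>
       r - birk (\<lambda>y. l y - k y) n x = r' - birk (\<lambda>y. l y - k y) n' x' \<and>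
       (\<forall>m<n. r - birk (\<lambda>y. l y - k y) m x \<ge> l ((sigmaA ^^ m) x)) \<and>
       (\<forall>m'<n'. r' - birk (\<lambda>y. l y - k y) m' x' \<ge> l ((sigmaA ^^ m') x')))"
proof -
  let ?g = "gs l k"
  let ?D = "\<lambda>p::(nat\<Rightarrow>nat)\<times>real. snd p \<ge> l (fst p)"
  let ?X = "XAR N A b"
  have kpos: "\<And>y. y \<in> XA N A \<Longrightarrow> k y - b (sigmaA y) \<ge> 0"
    using assms(5) unfolding suspension_triplet_def by (metis Nats_0 of_nat_0_le_iff Nats_cases)
  have kpos2: "\<And>y. y \<in> XA N A \<Longrightarrow> k y \<ge> 0" using assms(5) unfolding suspension_triplet_def by blast
  have closed: "\<And>p. p \<in> ?X \<Longrightarrow> ?D p \<Longrightarrow> ?g p \<in> ?X \<and> (p, ?g p) \<in> susp_step N A l k b"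
  proof -
    fix p assume p: "p \<in> ?X" "?D p"
    obtain y s where ys: "p = (y, s)" by force
    have y: "y \<in> XA N A" "s \<ge> b y" using p ys unfolding XAR_def by auto
    have "?g p \<in> ?X" using ys p y sigma_XA[OF y(1)] kpos[OF y(1)]
      unfolding XAR_def gs_def by auto
    moreover have "(p, ?g p) \<in> susp_step N A l k b"
      using p ys unfolding susp_step_def gs_def by auto
    ultimately show "?g p \<in> ?X \<and> (p, ?g p) \<in> susp_step N A l k b" by blast
  qed
  have rhs_eq: "(\<exists>n n' :: nat.
       (sigmaA ^^ n) x = (sigmaA ^^ n') x' \<and>
       r - birk (\<lambda>y. l y - k y) n x = r' - birk (\<lambda>y. l y - k y) n' x' \<and>
       (\<forall>m<n. r - birk (\<lambda>y. l y - k y) m x \<ge> l ((sigmaA ^^ m) x)) \<and>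
       (\<forall>m'<n'. r' - birk (\<lambda>y. l y - k y) m' x' \<ge> l ((sigmaA ^^ m') x')))
     \<longleftrightarrow> dR ?g ?D (x, r) (x', r')"
    unfolding dR_def dpath_def gs_pow by auto
  define E0 where "E0 = {(p, q). p \<in> ?X \<and> q \<in> ?X \<and> dR ?g ?D p q}"
  have eqv: "equiv ?X E0"
  proof (rule equivI)
    have "\<And>p. dR ?g ?D p p" unfolding dR_def dpath_def by (rule exI[of _ 0], rule exI[of _ 0]) simp
    show "E0 \<subseteq> ?X \<times> ?X" unfolding E0_def by blast
    show "refl_on ?X E0" by (rule refl_onI) (simp add: E0_def \<open>\<And>p. dR ?g ?D p p\<close>)
    have "\<And>p q. dR ?g ?D p q \<Longrightarrow> dR ?g ?D q p" by (rule dR_sym)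
    then show "sym E0" unfolding sym_def E0_def by blast
    show "trans E0"
    proof (rule transI)
      fix p q w assume "(p, q) \<in> E0" "(q, w) \<in> E0"
      then show "(p, w) \<in> E0" unfolding E0_def using dR_trans[of ?g ?D p q w] by simp
    qed
  qed
  have stepsub: "susp_step N A l k b \<subseteq> E0"
  proof
    fix z assume z: "z \<in> susp_step N A l k b"
    then obtain y s where ys: "z = ((y, s), (sigmaA y, s - (l y - k y)))" "(y, s) \<in> ?X" "s \<ge> l y"
      unfolding susp_step_def by blast
    have g: "?g (y, s) = (sigmaA y, s - (l y - k y))" by (simp add: gs_def)
    have "?g (y, s) \<in> ?X" using closed ys by simp
    moreover have "dR ?g ?D (y, s) (?g (y, s))" unfolding dR_def dpath_def
      using ys(3) by (intro exI[of _ 1] exI[of _ 0]) auto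
    ultimately show "z \<in> E0" using ys g unfolding E0_def by auto
  qed
  have paths: "\<And>E n p. equiv ?X E \<Longrightarrow> susp_step N A l k b \<subseteq> E \<Longrightarrow> p \<in> ?X \<Longrightarrow> dpath ?g ?D n p
      \<Longrightarrow> (p, (?g^^n) p) \<in> E \<and> (?g^^n) p \<in> ?X"
  proof -
    fix E n p assume e: "equiv ?X E" "susp_step N A l k b \<subseteq> E" "p \<in> ?X" "dpath ?g ?D n p"
    then show "(p, (?g^^n) p) \<in> E \<and> (?g^^n) p \<in> ?X"
    proof (induction n)
      case 0
      have "refl_on ?X E" using e(1) by (simp add: equiv_def)
      then show ?case using e(3) by (simp add: refl_on_def)
    next
      case (Suc n)
      have pn: "dpath ?g ?D n p" using Suc.prems(4) unfolding dpath_def by auto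
      have ih: "(p, (?g^^n) p) \<in> E" "(?g^^n) p \<in> ?X" using Suc.IH[OF Suc.prems(1-3) pn] by auto
      have d: "?D ((?g^^n) p)" using Suc.prems(4) unfolding dpath_def by blast
      have c: "?g ((?g^^n) p) \<in> ?X" "((?g^^n) p, ?g ((?g^^n) p)) \<in> E"
        using closed[OF ih(2) d] e(2) by auto
      have trE: "trans E" using e(1) by (simp add: equiv_def)
      have "(p, ?g ((?g^^n) p)) \<in> E" using transD[OF trE ih(1) c(2)] .
      then show ?case using c by simp
    qed
  qed
  show ?thesis unfolding rhs_eq
  proof
    assume "((x, r), (x', r')) \<in> susp_equiv N A l k b"
    moreover have "susp_equiv N A l k b \<subseteq> E0" unfolding susp_equiv_def
      using eqv stepsub by (intro Inter_lower) simp
    ultimately have "((x, r), (x', r')) \<in> E0" by (rule subsetD[rotated])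
    then show "dR ?g ?D (x, r) (x', r')" unfolding E0_def by simp
  next
    assume "dR ?g ?D (x, r) (x', r')"
    then obtain n n' where h: "(?g^^n) (x, r) = (?g^^n') (x', r')" "dpath ?g ?D n (x, r)" "dpath ?g ?D n' (x', r')"
      unfolding dR_def by blast
    show "((x, r), (x', r')) \<in> susp_equiv N A l k b" unfolding susp_equiv_def
    proof (rule InterI)
      fix E assume "E \<in> {E. equiv ?X E \<and> susp_step N A l k b \<subseteq> E}"
      then have e: "equiv ?X E" "susp_step N A l k b \<subseteq> E" by auto
      have a1: "((x, r), (?g^^n) (x, r)) \<in> E" using paths[OF e assms(6) h(2)] by blast
      have a2: "((x', r'), (?g^^n') (x', r')) \<in> E" using paths[OF e assms(7) h(3)] by blast
      have syE: "sym E" and trE: "trans E" using e(1) by (simp_all add: equiv_def)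
      have a3: "((?g^^n) (x, r), (x', r')) \<in> E" using symD[OF syE a2] h(1) by simp
      show "((x, r), (x', r')) \<in> E" using transD[OF trE a1 a3] .
    qed
  qed
qed

end
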